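(* Let $\Lambda=\{\lambda_n\}_{n\ge1}\subset\mathbb{D}$ be a Blaschke sequence (listed with multiplicity), $h\in H^2$, and $n\ge1$. Write $\prod_{l=1}^n(z-\lambda_l)=\prod_{l=1}^r(z-\mu_l)^{k_l}$ with $\mu_1,\dots,\mu_r$ distinct and $k_l\ge1$. Then for every $\zeta\in\mathbb{T}$, $$(A_{\overline{h}}\gamma_n)(\zeta)=\sqrt{1-|\lambda_n|^2}\sum_{l=1}^r\frac{1}{(k_l-1)!}\,\overline{\frac{d^{k_l-1}}{dw^{k_l-1}}\left[\frac{h(w)\prod_{m=1}^{n-1}(1-\overline{\lambda_m}w)}{(1-\overline{\zeta}w)\prod_{j=1,j\ne l}^r(w-\mu_j)^{k_j}}\right]_{w=\mu_l}}.$$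
   Context: $\mathbb{D}$ is the open unit disk, $\mathbb{T}$ the unit circle, $H^2$ the Hardy space. $I$ denotes the Blaschke product with zeros $\Lambda$, $K_I=H^2\ominus IH^2$, $P_I$ the orthogonal projection of $L^2(\mathbb{T})$ onto $K_I$, and $A_{\overline{h}}f=P_I(\overline{h}f)$. For $\lambda\in\mathbb{D}$, $b_\lambda(z)=\frac{z-\lambda}{1-\overline{\lambda}z}$, and $\gamma_n(z)=\frac{\sqrt{1-|\lambda_n|^2}}{1-\overline{\lambda_n}z}\prod_{k=1}^{n-1}b_{\lambda_k}(z)$. With $B_n=\prod_{k=1}^nb_{\lambda_k}$, $A_{\overline{h}}\gamma_n=P_+(\overline{h}\gamma_n)$ lies in $K_{B_n}$, a space of rational functions with no poles in the closed disk, and $(A_{\overline{h}}\gamma_n)(\zeta)$ is the value of this rational function at $\zeta$. *)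

theory Defs
  imports "HOL-Analysis.Analysis"
begin

(* Blaschke sequence indexed from 1: lam 1, lam 2, ... (lam 0 is irrelevant) *)
definition blaschke_seq :: "(nat \<Rightarrow> complex) \<Rightarrow> bool" where
  "blaschke_seq lam \<longleftrightarrow> (\<forall>n\<ge>1. norm (lam n) < 1) \<and> summable (\<lambda>n. 1 - norm (lam (Suc n)))"

definition taylor_coeff :: "(complex \<Rightarrow> complex) \<Rightarrow> nat \<Rightarrow> complex" where
  "taylor_coeff f k = (deriv ^^ k) f 0 / of_nat (fact k)"

definition H2 :: "(complex \<Rightarrow> complex) set" where
  "H2 = {f. f holomorphic_on ball 0 1 \<and> summable (\<lambda>k. (norm (taylor_coeff f k))\<^sup>2)}"

definition H2_inner :: "(complex \<Rightarrow> complex) \<Rightarrow> (complex \<Rightarrow> complex) \<Rightarrow> complex" where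
  "H2_inner f g = (\<Sum>k. taylor_coeff f k * cnj (taylor_coeff g k))"

definition bfac :: "complex \<Rightarrow> complex \<Rightarrow> complex" where
  "bfac a z = (z - a) / (1 - cnj a * z)"

definition gamma_fn :: "(nat \<Rightarrow> complex) \<Rightarrow> nat \<Rightarrow> complex \<Rightarrow> complex" where
  "gamma_fn lam n z = complex_of_real (sqrt (1 - (norm (lam n))\<^sup>2)) / (1 - cnj (lam n) * z)
      * (\<Prod>k=1..n-1. bfac (lam k) z)"

(* A_{conj h} f = P_+(conj h * f), as a holomorphic function on the disk:
   the k-th Fourier coefficient of conj(h) f on the circle is
   <conj(h) f, z^k>_{L^2} = <f, z^k h>_{H^2}. *)
definition toeplitz_conj :: "(complex \<Rightarrow> complex) \<Rightarrow> (complex \<Rightarrow> complex) \<Rightarrow> complex \<Rightarrow> complex" where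
  "toeplitz_conj h f z = (\<Sum>k. H2_inner f (\<lambda>w. w ^ k * h w) * z ^ k)"

end

theory Submission imports Defs "HOL-Complex_Analysis.Complex_Analysis" begin

lemma series_contour:
  fixes f :: "nat \<Rightarrow> complex \<Rightarrow> complex"
  assumes r: "0 < \<rho>"
    and hf: "\<And>j. (f j has_contour_integral I j) (circlepath z \<rho>)"
    and bd: "\<And>j w. w \<in> sphere z \<rho> \<Longrightarrow> norm (f j w) \<le> M j"
    and sm: "summable M"
  shows "(I sums contour_integral (circlepath z \<rho>) (\<lambda>w. \<Sum>j. f j w))"
    and "((\<lambda>w. \<Sum>j. f j w) has_contour_integral (\<Sum>j. I j)) (circlepath z \<rho>)"
proof -
  have ul: "uniform_limit (sphere z \<rho>) (\<lambda>n x. \<Sum>i<n. f i x) (\<lambda>x. \<Sum>i. f i x) sequentially"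
    by (rule Weierstrass_m_test[OF bd sm])
  have hs: "((\<lambda>x. \<Sum>i<n. f i x) has_contour_integral (\<Sum>i<n. I i)) (circlepath z \<rho>)" for n
    by (rule has_contour_integral_sum) (auto intro: hf)
  have ev: "\<forall>\<^sub>F n in sequentially. (\<lambda>x. \<Sum>i<n. f i x) contour_integrable_on (circlepath z \<rho>)"
    unfolding contour_integrable_on_def using hs by (intro always_eventually allI) blast
  note L = contour_integral_uniform_limit_circlepath[OF ev ul _ r]
  have "(\<lambda>n. contour_integral (circlepath z \<rho>) (\<lambda>x. \<Sum>i<n. f i x)) = (\<lambda>n. \<Sum>i<n. I i)"
    using hs contour_integral_unique by blast
  with L(2) show S: "I sums contour_integral (circlepath z \<rho>) (\<lambda>w. \<Sum>j. f j w)"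
    unfolding sums_def by simp
  show "((\<lambda>w. \<Sum>j. f j w) has_contour_integral (\<Sum>j. I j)) (circlepath z \<rho>)"
    using has_contour_integral_integral[OF L(1)] sums_unique[OF S] by simp
qed


lemma bfac_conj:
  assumes "w \<noteq> 0" "w \<noteq> a"
  shows "cnj (bfac a (1 / cnj w)) = (1 - cnj a * w) / (w - a)"
proof -
  have "cnj (bfac a (1 / cnj w)) = (1 / w - cnj a) / (1 - a * (1 / w))"
    by (simp add: bfac_def)
  also have "\<dots> = (1 - cnj a * w) / (w - a)"
    using assms by (simp add: field_simps)
  finally show ?thesis .
qed

lemma first_conj:
  assumes "w \<noteq> 0" "w \<noteq> a"
  shows "cnj (complex_of_real s / (1 - cnj a * (1 / cnj w))) / w = complex_of_real s / (w - a)"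
proof -
  have "cnj (complex_of_real s / (1 - cnj a * (1 / cnj w))) / w = complex_of_real s / (1 - a * (1 / w)) / w"
    by simp
  also have "\<dots> = complex_of_real s / (w - a)"
    using assms by (simp add: field_simps)
  finally show ?thesis .
qed


theorem proposition3p2:
  fixes lam :: "nat \<Rightarrow> complex" and h :: "complex \<Rightarrow> complex" and n r :: nat
    and mu :: "nat \<Rightarrow> complex" and k :: "nat \<Rightarrow> nat" and \<zeta> :: complex
  assumes "blaschke_seq lam"
    and "h \<in> H2"
    and "n \<ge> 1"
    and "inj_on mu {1..r}"
    and "\<forall>l\<in>{1..r}. k l \<ge> 1"
    and "\<forall>z. (\<Prod>l=1..n. z - lam l) = (\<Prod>l=1..r. (z - mu l) ^ k l)"
    and "norm \<zeta> = 1"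
  shows "(toeplitz_conj h (gamma_fn lam n) \<longlongrightarrow>
           complex_of_real (sqrt (1 - (norm (lam n))\<^sup>2)) *
           (\<Sum>l=1..r. cnj ((deriv ^^ (k l - 1))
              (\<lambda>w. h w * (\<Prod>m=1..n-1. 1 - cnj (lam m) * w) /
                    ((1 - cnj \<zeta> * w) * (\<Prod>j\<in>{1..r}-{l}. (w - mu j) ^ k j)))
              (mu l)) / of_nat (fact (k l - 1))))
         (at \<zeta> within ball 0 1)"
proof -
  define c where "c = complex_of_real (sqrt (1 - (norm (lam n))\<^sup>2))"
  define \<gamma> where "\<gamma> = gamma_fn lam n"
  have lam1: "norm (lam m) < 1" if "m \<in> {1..n}" for m
    using assms(1) that by (auto simp: blaschke_seq_def)
  define \<sigma> where "\<sigma> = Max (norm ` lam ` {1..n})"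
  have \<sigma>ge: "norm (lam m) \<le> \<sigma>" if "m \<in> {1..n}" for m
    unfolding \<sigma>_def using that by (intro Max_ge) auto
  have \<sigma>1: "\<sigma> < 1"
    unfolding \<sigma>_def using lam1 assms(3) by (subst Max_less_iff) auto
  have \<sigma>0: "0 \<le> \<sigma>"
    using \<sigma>ge[of n] assms(3) norm_ge_zero[of "lam n"] by (meson atLeastAtMost_iff order_refl order_trans)
  define R where "R = 2 / (1 + \<sigma>)"
  define \<rho> where "\<rho> = (3 + \<sigma>) / 4"
  have R1: "1 < R" using \<sigma>0 \<sigma>1 by (simp add: R_def field_simps)
  have \<sigma>R: "\<sigma> * R < 1" using \<sigma>0 \<sigma>1 by (simp add: R_def field_simps)
  have \<rho>0: "0 < \<rho>" and \<rho>1: "\<rho> < 1" and \<sigma>\<rho>: "\<sigma> < \<rho>"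
    using \<sigma>0 \<sigma>1 by (simp_all add: \<rho>_def)
  have \<rho>R: "1 < \<rho> * R" using \<sigma>0 \<sigma>1 by (simp add: R_def \<rho>_def field_simps)
  have mu_lam: "\<exists>m\<in>{1..n}. mu l = lam m" if "l \<in> {1..r}" for l
  proof -
    have "(\<Prod>j=1..r. (mu l - mu j) ^ k j) = 0"
    proof (intro prod_zero bexI[of _ l])
      show "(mu l - mu l) ^ k l = 0" using that assms(5) by (simp add: Suc_le_eq)
    qed (use that in auto)
    then have "(\<Prod>m=1..n. mu l - lam m) = 0" using assms(6) by metis
    then show ?thesis by (auto simp: prod_zero_iff)
  qed
  have lam_mu: "\<exists>l\<in>{1..r}. lam m = mu l" if "m \<in> {1..n}" for m
  proof -
    have "(\<Prod>j=1..n. lam m - lam j) = 0"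
      using that by (intro prod_zero) auto
    then have "(\<Prod>l=1..r. (lam m - mu l) ^ k l) = 0" using assms(6) by metis
    then show ?thesis by (auto simp: prod_zero_iff)
  qed
  have den: "1 - cnj (lam m) * u \<noteq> 0" if "m \<in> {1..n}" "norm u \<le> R" for m u
  proof
    assume "1 - cnj (lam m) * u = 0"
    then have "cnj (lam m) * u = 1" by simp
    then have "norm (cnj (lam m) * u) = 1" by simp
    moreover have "norm (cnj (lam m) * u) \<le> \<sigma> * R"
      unfolding norm_mult complex_mod_cnj
      using \<sigma>ge[OF that(1)] that(2) \<sigma>0 by (intro mult_mono) auto
    ultimately show False using \<sigma>R by simp
  qed
  have hol\<gamma>: "\<gamma> holomorphic_on cball 0 R"
    unfolding \<gamma>_def gamma_fn_def bfac_def using den assms(3)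
    by (auto intro!: holomorphic_intros)
  obtain B where B: "\<And>u. u \<in> cball 0 R \<Longrightarrow> norm (\<gamma> u) \<le> B"
    using compact_imp_bounded[OF compact_continuous_image[OF holomorphic_on_imp_continuous_on[OF hol\<gamma>] compact_cball]]
    unfolding bounded_iff by (metis imageI)
  have B0: "0 \<le> B"
  proof -
    have "norm (\<gamma> 0) \<le> B" using B R1 by simp
    then show ?thesis by (rule order_trans[OF norm_ge_zero])
  qed
  define a where "a j = taylor_coeff \<gamma> j" for j
  have abd: "norm (a j) \<le> B / R ^ j" for j
  proof -
    have "norm ((deriv ^^ j) \<gamma> 0) \<le> fact j * B / R ^ j"
      using R1 B
      by (intro Cauchy_inequality holomorphic_on_subset[OF hol\<gamma>] holomorphic_on_imp_continuous_on[OF hol\<gamma>])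
         (auto simp: norm_minus_commute)
    then show ?thesis
      by (simp add: a_def taylor_coeff_def norm_divide field_simps)
  qed
  have aser: "(\<lambda>j. a j * u ^ j) sums \<gamma> u" if "norm u < R" for u
    using holomorphic_power_series[OF holomorphic_on_subset[OF hol\<gamma>], of 0 R u] that
    by (simp add: a_def taylor_coeff_def)

  define \<Psi> where "\<Psi> w = c / (w - lam n) * (\<Prod>m=1..n-1. (1 - cnj (lam m) * w) / (w - lam m))" for w
  define Q where "Q w = h w * \<Psi> w" for w
  have holh: "h holomorphic_on ball 0 1" using assms(2) by (simp add: H2_def)
  have sph: "sphere 0 \<rho> \<subseteq> ball 0 1" using \<rho>1 by auto
  have nolam: "w - lam m \<noteq> 0" if "w \<in> sphere 0 \<rho>" "m \<in> {1..n}" for w m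
    using \<sigma>ge[OF that(2)] that(1) \<sigma>\<rho> by auto
  have lam\<rho>: "norm (lam m) < \<rho>" if "1 \<le> m" "m \<le> n" for m
    using \<sigma>ge[of m] that \<sigma>\<rho> by auto
  have contQ: "continuous_on (sphere 0 \<rho>) Q"
    unfolding Q_def \<Psi>_def using lam\<rho> assms(3)
    by (force intro!: continuous_intros holomorphic_on_imp_continuous_on[OF holomorphic_on_subset[OF holh sph]])
  have conth: "continuous_on (sphere 0 \<rho>) h"
    by (rule holomorphic_on_imp_continuous_on[OF holomorphic_on_subset[OF holh sph]])
  obtain Qb where Qb: "\<And>w. w \<in> sphere 0 \<rho> \<Longrightarrow> norm (Q w) \<le> Qb"
    using compact_imp_bounded[OF compact_continuous_image[OF contQ compact_sphere]]
    unfolding bounded_iff by (metis imageI)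
  obtain Hb where Hb: "\<And>w. w \<in> sphere 0 \<rho> \<Longrightarrow> norm (h w) \<le> Hb"
    using compact_imp_bounded[OF compact_continuous_image[OF conth compact_sphere]]
    unfolding bounded_iff by (metis imageI)
  have "norm (Q (of_real \<rho>)) \<le> Qb" "norm (h (of_real \<rho>)) \<le> Hb"
    using Qb[of "of_real \<rho>"] Hb[of "of_real \<rho>"] \<rho>0 by auto
  then have Qb0: "0 \<le> Qb" and Hb0: "0 \<le> Hb"
    by (auto intro: order_trans[OF norm_ge_zero])
  have conjgam: "cnj (\<gamma> (1 / cnj w)) / w = \<Psi> w" if "w \<in> sphere 0 \<rho>" for w
  proof -
    have w0: "w \<noteq> 0" using that \<rho>0 by auto
    have wl: "w \<noteq> lam m" if "1 \<le> m" "m \<le> n" for m using nolam[OF \<open>w \<in> sphere 0 \<rho>\<close>] that by simp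
    have wl2: "w \<noteq> lam m" if "1 \<le> m" "m \<le> n - 1" for m using wl that by simp
    have "cnj (\<gamma> (1 / cnj w)) / w = cnj (c / (1 - cnj (lam n) * (1 / cnj w))) / w *
           (\<Prod>m=1..n-1. cnj (bfac (lam m) (1 / cnj w)))"
      by (simp add: \<gamma>_def gamma_fn_def c_def)
    also have "\<dots> = \<Psi> w"
    proof -
      have e1: "cnj (c / (1 - cnj (lam n) * (1 / cnj w))) / w = c / (w - lam n)"
        unfolding c_def by (rule first_conj[OF w0 wl]) (use assms(3) in auto)
      have e2: "(\<Prod>m=1..n-1. cnj (bfac (lam m) (1 / cnj w))) = (\<Prod>m=1..n-1. (1 - cnj (lam m) * w) / (w - lam m))"
        by (intro prod.cong refl bfac_conj w0 wl2) auto
      show ?thesis unfolding \<Psi>_def e1 e2 ..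
    qed
    finally show ?thesis .
  qed

  define T where "T k = contour_integral (circlepath 0 \<rho>) (\<lambda>w. w ^ k * Q w)" for k
  have Tk: "((\<lambda>w. w ^ k * Q w) has_contour_integral T k) (circlepath 0 \<rho>) \<and>
            H2_inner \<gamma> (\<lambda>w. w ^ k * h w) = cnj (T k / (2 * pi * \<i>))" for k
  proof -
    define g where "g = (\<lambda>w. w ^ k * h w)"
    define b where "b j = taylor_coeff g j" for j
    have holg: "g holomorphic_on ball 0 1"
      unfolding g_def by (intro holomorphic_intros holh)
    have cb: "cball 0 \<rho> \<subseteq> ball 0 1" using \<rho>1 by auto
    have ci: "((\<lambda>w. g w / w ^ Suc j) has_contour_integral (2*pi*\<i>) / fact j * (deriv ^^ j) g 0) (circlepath 0 \<rho>)" for j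
    proof -
      have "((\<lambda>w. g w / (w - 0) ^ Suc j) has_contour_integral (2*pi*\<i>) / fact j * (deriv ^^ j) g 0) (circlepath 0 \<rho>)"
    proof (rule Cauchy_has_contour_integral_higher_derivative_circlepath)
      show "continuous_on (cball 0 \<rho>) g"
        by (rule holomorphic_on_imp_continuous_on[OF holomorphic_on_subset[OF holg cb]])
      show "g holomorphic_on ball 0 \<rho>"
        by (rule holomorphic_on_subset[OF holg]) (use \<rho>1 in auto)
    qed (use \<rho>0 in auto)
      then show ?thesis by simp
    qed
    define f where "f j w = cnj (a j) * (g w / w ^ Suc j)" for j w
    define I where "I j = cnj (a j) * ((2*pi*\<i>) * b j)" for j
    have fi: "(f j has_contour_integral I j) (circlepath 0 \<rho>)" for j
      unfolding f_def I_def using has_contour_integral_lmul[OF ci[of j], of "cnj (a j)"]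
      by (simp add: b_def taylor_coeff_def)
    define M where "M j = B * (\<rho> ^ k * Hb) / \<rho> * (1 / (R*\<rho>)) ^ j" for j
    have fb: "norm (f j w) \<le> M j" if "w \<in> sphere 0 \<rho>" for j w
    proof -
      have nw: "norm w = \<rho>" using that by simp
      have "norm (f j w) = norm (a j) * (\<rho> ^ k * norm (h w)) / \<rho> ^ Suc j"
        by (simp add: f_def g_def norm_mult norm_divide norm_power nw)
      also have "\<dots> \<le> (B / R ^ j) * (\<rho> ^ k * Hb) / \<rho> ^ Suc j"
      proof (rule divide_right_mono)
        have "\<rho> ^ k * norm (h w) \<le> \<rho> ^ k * Hb"
          using Hb[OF that] \<rho>0 by (intro mult_left_mono) auto
        moreover have "0 \<le> B / R ^ j" using B0 R1 by simp
        ultimately show "norm (a j) * (\<rho> ^ k * norm (h w)) \<le> (B / R ^ j) * (\<rho> ^ k * Hb)"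
          using abd[of j] \<rho>0 by (intro mult_mono[where a="norm (a j)"]) auto
      qed (use \<rho>0 in simp)
      also have "\<dots> = M j"
        unfolding M_def by (simp add: field_simps power_mult_distrib)
      finally show ?thesis .
    qed
    have sM: "summable M"
      unfolding M_def using \<rho>R \<rho>0 R1
      by (intro summable_mult summable_geometric) (auto simp: mult.commute)
    have fsum: "(\<Sum>j. f j w) = w ^ k * Q w" if "w \<in> sphere 0 \<rho>" for w
    proof -
      have w0: "w \<noteq> 0" using that \<rho>0 by auto
      have nu: "norm (1 / cnj w) < R"
      proof -
        have "norm (1 / cnj w) = 1 / \<rho>" using that by (simp add: norm_divide)
        then show ?thesis using \<rho>R \<rho>0 by (simp add: divide_less_eq mult.commute)
      qed
      have "(\<lambda>j. cnj (a j * (1 / cnj w) ^ j)) sums cnj (\<gamma> (1 / cnj w))"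
        by (rule sums_cnj[THEN iffD2, OF aser[OF nu]])
      then have "(\<lambda>j. g w / w * cnj (a j * (1 / cnj w) ^ j)) sums (g w / w * cnj (\<gamma> (1 / cnj w)))"
        by (rule sums_mult)
      moreover have "(\<lambda>j. g w / w * cnj (a j * (1 / cnj w) ^ j)) = (\<lambda>j. f j w)"
        by (rule ext) (simp add: f_def power_divide divide_inverse mult_ac power_inverse)
      moreover have "g w / w * cnj (\<gamma> (1 / cnj w)) = w ^ k * Q w"
      proof -
        have "g w / w * cnj (\<gamma> (1 / cnj w)) = g w * (cnj (\<gamma> (1 / cnj w)) / w)" by simp
        also have "\<dots> = g w * \<Psi> w" by (simp only: conjgam[OF that])
        finally show ?thesis by (simp add: g_def Q_def mult.assoc)
      qed
      ultimately have "(\<lambda>j. f j w) sums (w ^ k * Q w)" by simp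
      then show ?thesis by (rule sums_unique[symmetric])
    qed
    note SC = series_contour[OF \<rho>0 fi fb sM]
    have ce: "contour_integral (circlepath 0 \<rho>) (\<lambda>w. \<Sum>j. f j w) = T k"
      unfolding T_def using \<rho>0 by (intro contour_integral_eq) (simp add: fsum)
    have S1: "I sums T k" using SC(1) ce by simp
    have "((\<lambda>w. w ^ k * Q w) has_contour_integral T k) (circlepath 0 \<rho>)"
      using has_contour_integral_eq[OF SC(2)] sums_unique[OF S1] \<rho>0 by (simp add: fsum)
    moreover have "(\<lambda>j. a j * cnj (b j)) sums cnj (T k / (2 * pi * \<i>))"
    proof -
      have "(\<lambda>j. I j / (2 * pi * \<i>)) sums (T k / (2 * pi * \<i>))"
        by (rule sums_divide[OF S1])
      then have "(\<lambda>j. cnj (I j / (2 * pi * \<i>))) sums cnj (T k / (2 * pi * \<i>))"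
        by (rule sums_cnj[THEN iffD2])
      moreover have "(\<lambda>j. cnj (I j / (2 * pi * \<i>))) = (\<lambda>j. a j * cnj (b j))"
        by (rule ext) (simp add: I_def algebra_simps)
      ultimately show ?thesis by simp
    qed
    then have "H2_inner \<gamma> (\<lambda>w. w ^ k * h w) = cnj (T k / (2 * pi * \<i>))"
    proof -
      have "H2_inner \<gamma> (\<lambda>w. w ^ k * h w) = (\<Sum>j. a j * cnj (b j))"
        by (simp add: H2_inner_def a_def b_def g_def)
      with sums_unique[OF \<open>(\<lambda>j. a j * cnj (b j)) sums cnj (T k / (2 * pi * \<i>))\<close>] show ?thesis by simp
    qed
    ultimately show ?thesis by blast
  qed

  define J where "J z = contour_integral (circlepath 0 \<rho>) (\<lambda>w. Q w / (1 - cnj z * w))" for z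
  have dnz: "1 - cnj z * w \<noteq> 0" "norm (1 - cnj z * w) \<ge> 1 - \<rho>" if "norm z \<le> 1" "w \<in> sphere 0 \<rho>" for z w
  proof -
    have "norm (cnj z * w) \<le> \<rho>"
      using that \<rho>0 by (simp add: norm_mult mult_left_le_one_le)
    moreover have "1 \<le> norm (1 - cnj z * w) + norm (cnj z * w)"
      using norm_triangle_ineq[of "1 - cnj z * w" "cnj z * w"] by simp
    ultimately show "norm (1 - cnj z * w) \<ge> 1 - \<rho>" by linarith
    then show "1 - cnj z * w \<noteq> 0" using \<rho>1 by auto
  qed
  have toe: "toeplitz_conj h \<gamma> z = cnj (J z / (2 * pi * \<i>))" if z: "z \<in> ball 0 1" for z
  proof -
    have nz: "norm z \<le> 1" using z by simp
    define f where "f k w = cnj z ^ k * (w ^ k * Q w)" for k w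
    define I where "I k = cnj z ^ k * T k" for k
    have fi: "(f k has_contour_integral I k) (circlepath 0 \<rho>)" for k
      unfolding f_def I_def using has_contour_integral_lmul[OF conjunct1[OF Tk[of k]], of "cnj z ^ k"] .
    define M where "M k = Qb * \<rho> ^ k" for k
    have fb: "norm (f k w) \<le> M k" if "w \<in> sphere 0 \<rho>" for k w
    proof -
      have "norm (f k w) = norm z ^ k * \<rho> ^ k * norm (Q w)"
        using that by (simp add: f_def norm_mult norm_power)
      also have "\<dots> \<le> 1 * \<rho> ^ k * Qb"
        using Qb[OF that] nz \<rho>0
        by (intro mult_mono power_le_one) auto
      finally show ?thesis by (simp add: M_def mult.commute)
    qed
    have sM: "summable M"
      unfolding M_def using \<rho>0 \<rho>1 by (intro summable_mult summable_geometric) auto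
    have fsum: "(\<Sum>k. f k w) = Q w / (1 - cnj z * w)" if "w \<in> sphere 0 \<rho>" for w
    proof -
      have "norm (cnj z * w) < 1"
        using that nz \<rho>1 \<rho>0 by (simp add: norm_mult) (metis mult_left_le_one_le norm_ge_zero order_le_less_trans)
      then have "(\<lambda>k. (cnj z * w) ^ k) sums (1 / (1 - cnj z * w))"
        by (rule geometric_sums)
      then have "(\<lambda>k. (cnj z * w) ^ k * Q w) sums (1 / (1 - cnj z * w) * Q w)"
        by (rule sums_mult2)
      moreover have "(\<lambda>k. (cnj z * w) ^ k * Q w) = (\<lambda>k. f k w)"
        by (rule ext) (simp add: f_def power_mult_distrib mult_ac)
      ultimately have "(\<lambda>k. f k w) sums (Q w / (1 - cnj z * w))" by simp
      then show ?thesis by (rule sums_unique[symmetric])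
    qed
    note SC = series_contour[OF \<rho>0 fi fb sM]
    have ce: "contour_integral (circlepath 0 \<rho>) (\<lambda>w. \<Sum>k. f k w) = J z"
      unfolding J_def using \<rho>0 by (intro contour_integral_eq) (simp add: fsum)
    have S1: "I sums J z" using SC(1) ce by simp
    have "(\<lambda>k. I k / (2 * pi * \<i>)) sums (J z / (2 * pi * \<i>))"
      by (rule sums_divide[OF S1])
    then have S2: "(\<lambda>k. cnj (I k / (2 * pi * \<i>))) sums cnj (J z / (2 * pi * \<i>))"
      by (rule sums_cnj[THEN iffD2])
    have "(\<lambda>k. cnj (I k / (2 * pi * \<i>))) = (\<lambda>k. H2_inner \<gamma> (\<lambda>w. w ^ k * h w) * z ^ k)"
    proof (rule ext)
      fix k
      show "cnj (I k / (2 * pi * \<i>)) = H2_inner \<gamma> (\<lambda>w. w ^ k * h w) * z ^ k"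
        unfolding conjunct2[OF Tk[of k]] I_def by (simp add: mult.commute)
    qed
    with S2 have "(\<lambda>k. H2_inner \<gamma> (\<lambda>w. w ^ k * h w) * z ^ k) sums cnj (J z / (2 * pi * \<i>))"
      by simp
    then show ?thesis
      unfolding toeplitz_conj_def \<gamma>_def[symmetric] by (rule sums_unique[symmetric])
  qed

  have Jint: "((\<lambda>w. Q w / (1 - cnj z * w)) has_contour_integral J z) (circlepath 0 \<rho>)"
    if "norm z \<le> 1" for z
  proof -
    have "continuous_on (sphere 0 \<rho>) (\<lambda>w. Q w / (1 - cnj z * w))"
      using dnz(1)[OF that] by (intro continuous_intros contQ) auto
    then have "(\<lambda>w. Q w / (1 - cnj z * w)) contour_integrable_on (circlepath 0 \<rho>)"
      using \<rho>0 by (intro contour_integrable_continuous_circlepath) simp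
    then show ?thesis unfolding J_def by (rule has_contour_integral_integral)
  qed
  define K where "K = Qb * (\<rho> / (1 - \<rho>)^2) * (2 * pi * \<rho>)"
  have Jlip: "norm (J z - J \<zeta>) \<le> K * norm (z - \<zeta>)" if "norm z \<le> 1" for z
  proof -
    have nzeta: "norm \<zeta> \<le> 1" using assms(7) by simp
    have hi: "((\<lambda>w. Q w / (1 - cnj z * w) - Q w / (1 - cnj \<zeta> * w)) has_contour_integral (J z - J \<zeta>)) (circlepath 0 \<rho>)"
      by (rule has_contour_integral_diff[OF Jint[OF that] Jint[OF nzeta]])
    have "norm (J z - J \<zeta>) \<le> (Qb * (norm (z - \<zeta>) * \<rho> / (1 - \<rho>)^2)) * (2 * pi * \<rho>)"
    proof (rule has_contour_integral_bound_circlepath[OF hi])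
      show "0 \<le> Qb * (norm (z - \<zeta>) * \<rho> / (1 - \<rho>)^2)"
        using Qb0 \<rho>0 by simp
      show "0 < \<rho>" by (rule \<rho>0)
      fix w :: complex assume "norm (w - 0) = \<rho>"
      then have w: "w \<in> sphere 0 \<rho>" by simp
      have d1: "1 - cnj z * w \<noteq> 0" and d2: "1 - cnj \<zeta> * w \<noteq> 0"
        using dnz(1)[OF that w] dnz(1)[OF nzeta w] .
      have eq: "Q w / (1 - cnj z * w) - Q w / (1 - cnj \<zeta> * w) =
                Q w * ((cnj z - cnj \<zeta>) * w / ((1 - cnj z * w) * (1 - cnj \<zeta> * w)))"
        using d1 d2 by (simp add: field_simps)
      have n1: "norm ((cnj z - cnj \<zeta>) * w) = norm (z - \<zeta>) * \<rho>"
        using w by (simp add: norm_mult flip: complex_cnj_diff)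
      have n2: "(1 - \<rho>)^2 \<le> norm ((1 - cnj z * w) * (1 - cnj \<zeta> * w))"
        unfolding norm_mult power2_eq_square using dnz(2)[OF that w] dnz(2)[OF nzeta w] \<rho>1
        by (intro mult_mono) auto
      have "norm ((cnj z - cnj \<zeta>) * w / ((1 - cnj z * w) * (1 - cnj \<zeta> * w))) \<le> norm (z - \<zeta>) * \<rho> / (1 - \<rho>)^2"
      proof -
        have p1: "0 < (1 - \<rho>)^2" using \<rho>1 by simp
        have p2: "0 < norm ((1 - cnj z * w) * (1 - cnj \<zeta> * w))" using d1 d2 by simp
        show ?thesis
          unfolding norm_divide n1 using n2 \<rho>0 p1 p2
          by (intro divide_left_mono) auto
      qed
      then show "norm (Q w / (1 - cnj z * w) - Q w / (1 - cnj \<zeta> * w)) \<le> Qb * (norm (z - \<zeta>) * \<rho> / (1 - \<rho>)^2)"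
        unfolding eq norm_mult using Qb[OF w] Qb0 by (intro mult_mono) auto
    qed
    then show ?thesis by (simp add: K_def field_simps)
  qed
  have Jlim: "(J \<longlongrightarrow> J \<zeta>) (at \<zeta> within ball 0 1)"
  proof (rule LIM_zero_cancel, rule Lim_null_comparison)
    show "\<forall>\<^sub>F z in at \<zeta> within ball 0 1. norm (J z - J \<zeta>) \<le> K * norm (z - \<zeta>)"
      unfolding eventually_at_filter using Jlip by (intro always_eventually) auto
    have "((\<lambda>z. K * norm (z - \<zeta>)) \<longlongrightarrow> K * norm (\<zeta> - \<zeta>)) (at \<zeta> within ball 0 1)"
      by (intro tendsto_intros)
    then show "((\<lambda>z. K * norm (z - \<zeta>)) \<longlongrightarrow> 0) (at \<zeta> within ball 0 1)" by simp
  qed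
  have lim2: "(toeplitz_conj h \<gamma> \<longlongrightarrow> cnj (J \<zeta> / (2 * pi * \<i>))) (at \<zeta> within ball 0 1)"
  proof (rule Lim_transform_within[where d=1])
    show "((\<lambda>z. cnj (J z / (2 * pi * \<i>))) \<longlongrightarrow> cnj (J \<zeta> / (2 * pi * \<i>))) (at \<zeta> within ball 0 1)"
      by (intro tendsto_intros Jlim) simp
  qed (use toe in auto)

  define F where "F l = (\<lambda>w. h w * (\<Prod>m=1..n-1. 1 - cnj (lam m) * w) /
                    ((1 - cnj \<zeta> * w) * (\<Prod>j\<in>{1..r}-{l}. (w - mu j) ^ k j)))" for l
  define pts where "pts = mu ` {1..r}"
  define fz where "fz w = Q w / (1 - cnj \<zeta> * w)" for w
  have finpts: "finite pts" unfolding pts_def by simp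
  have pts_small: "norm p < \<rho>" if "p \<in> pts" for p
    using that mu_lam lam\<rho> unfolding pts_def by fastforce
  have lam_pts: "lam m \<in> pts" if "1 \<le> m" "m \<le> n" for m
    using lam_mu[of m] that unfolding pts_def by auto
  have zden: "1 - cnj \<zeta> * w \<noteq> 0" if "w \<in> ball 0 1" for w
  proof
    assume "1 - cnj \<zeta> * w = 0"
    then have "norm (cnj \<zeta> * w) = 1" by (metis eq_iff_diff_eq_0 norm_one)
    then show False using that assms(7) by (simp add: norm_mult)
  qed
  have holf: "fz holomorphic_on ball 0 1 - pts"
  proof -
    have nl: "w - lam m \<noteq> 0" if "w \<notin> pts" "1 \<le> m" "m \<le> n" for w m
      using lam_pts[OF that(2,3)] that(1) by auto
    have sub: "ball 0 1 - pts \<subseteq> ball 0 1" by auto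
    have hh: "h holomorphic_on ball 0 1 - pts" by (rule holomorphic_on_subset[OF holh sub])
    have n1: "w - lam n \<noteq> 0" if "w \<in> ball 0 1 - pts" for w
      using nl[of w n] that assms(3) by auto
    have n2: "w - lam m \<noteq> 0" if "w \<in> ball 0 1 - pts" "m \<in> {1..n-1}" for w m
      using nl[of w m] that by (metis atLeastAtMost_iff Diff_iff diff_le_self le_trans)
    have n3: "1 - cnj \<zeta> * w \<noteq> 0" if "w \<in> ball 0 1 - pts" for w
      using zden that by auto
    have lp2: "lam m \<in> pts" if "1 \<le> m" "m \<le> n - 1" for m using lam_pts[of m] that by simp
    have z3: "cnj \<zeta> * w \<noteq> 1" if "norm w < 1" for w using zden[of w] that by auto
    show ?thesis
      unfolding fz_def Q_def \<Psi>_def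
    proof (intro holomorphic_intros hh)
      show "w - lam n \<noteq> 0" if "w \<in> ball 0 1 - pts" for w using n1 that .
    qed (use lp2 z3 in force)+
  qed
  have RT: "contour_integral (circlepath 0 \<rho>) fz =
            2 * pi * \<i> * (\<Sum>p\<in>pts. winding_number (circlepath 0 \<rho>) p * residue fz p)"
  proof (rule Residue_theorem[OF open_ball convex_connected[OF convex_ball] finpts holf])
    show "path_image (circlepath 0 \<rho>) \<subseteq> ball 0 1 - pts"
      using \<rho>0 \<rho>1 pts_small by fastforce
    show "\<forall>z. z \<notin> ball 0 1 \<longrightarrow> winding_number (circlepath 0 \<rho>) z = 0"
    proof (intro allI impI)
      fix z :: complex assume "z \<notin> ball 0 1"
      then show "winding_number (circlepath 0 \<rho>) z = 0"
        using \<rho>0 \<rho>1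
        by (intro winding_number_zero_outside[of _ "cball 0 \<rho>"]) auto
    qed
  qed auto
  have res: "residue fz (mu l) = c * ((deriv ^^ (k l - 1)) (F l) (mu l) / fact (k l - 1))"
    if l: "l \<in> {1..r}" for l
  proof -
    define A where "A = ball 0 1 - (pts - {mu l})"
    have openA: "open A" unfolding A_def using finpts
      by (intro open_Diff open_ball finite_imp_closed) auto
    have muA: "mu l \<in> A" unfolding A_def using pts_small[of "mu l"] l \<rho>1 by (auto simp: pts_def)
    have kl: "k l = Suc (k l - 1)" using bspec[OF assms(5) l] by simp
    have nmu: "w - mu j \<noteq> 0" if "w \<in> A" "j \<in> {1..r}-{l}" for w j
    proof
      assume "w - mu j = 0"
      then have "w = mu j" by simp
      moreover have "mu j \<noteq> mu l" using inj_onD[OF assms(4)] that(2) l by blast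
      ultimately show False using that(1) that(2) unfolding A_def pts_def by auto
    qed
    have holF: "F l holomorphic_on A"
    proof -
      have sub: "A \<subseteq> ball 0 1" unfolding A_def by auto
      have hh: "h holomorphic_on A" by (rule holomorphic_on_subset[OF holh sub])
      have n3: "1 - cnj \<zeta> * w \<noteq> 0" if "w \<in> A" for w
        using zden that sub by auto
      have n4: "(\<Prod>j\<in>{1..r}-{l}. (w - mu j) ^ k j) \<noteq> 0" if "w \<in> A" for w
        using nmu[OF that] by (auto simp: prod_zero_iff)
      show ?thesis
        unfolding F_def
      proof (intro holomorphic_intros hh)
        fix w assume "w \<in> A"
        then show "(1 - cnj \<zeta> * w) * (\<Prod>j\<in>{1..r}-{l}. (w - mu j) ^ k j) \<noteq> 0"
          using n3 n4 by simp
      qed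
    qed
    have eq: "fz w = c * (F l w / (w - mu l) ^ Suc (k l - 1))" if w: "w \<in> A - {mu l}" for w
    proof -
      have wb: "w \<in> ball 0 1" and wp: "w \<notin> pts" using w unfolding A_def pts_def by auto
      have nl: "w - lam m \<noteq> 0" if "1 \<le> m" "m \<le> n" for m
        using lam_pts[OF that] wp by auto
      define P1 where "P1 = (\<Prod>m=1..n-1. 1 - cnj (lam m) * w)"
      define P0 where "P0 = (\<Prod>m=1..n-1. w - lam m)"
      define Y where "Y = (\<Prod>j\<in>{1..r}-{l}. (w - mu j) ^ k j)"
      have nl2: "w - lam m \<noteq> 0" if "m \<in> {1..n-1}" for m using nl[of m] that by (metis atLeastAtMost_iff diff_le_self le_trans)
      have P0nz: "P0 \<noteq> 0" unfolding P0_def using nl2 by (simp add: prod_zero_iff)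
      have Ynz: "Y \<noteq> 0" unfolding Y_def using nmu[of w] w by (auto simp: prod_zero_iff)
      have Psi: "\<Psi> w = c * P1 / (P0 * (w - lam n))"
      proof -
        have "\<Psi> w = c / (w - lam n) * (P1 / P0)" unfolding \<Psi>_def prod_dividef P1_def P0_def ..
        also have "\<dots> = c * P1 / ((w - lam n) * P0)" by (rule times_divide_times_eq)
        also have "\<dots> = c * P1 / (P0 * (w - lam n))" by (subst mult.commute[of P0]) (rule refl)
        finally show ?thesis .
      qed
      have "(\<Prod>m=1..n. w - lam m) = P0 * (w - lam n)"
      proof -
        have "(\<Prod>m=1..n. w - lam m) = (\<Prod>m=1..Suc (n-1). w - lam m)" using assms(3) by simp
        also have "\<dots> = P0 * (w - lam (Suc (n - 1)))" unfolding P0_def by (rule prod.cl_ivl_Suc[THEN trans]) simp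
        finally show ?thesis using assms(3) by simp
      qed
      moreover have "(\<Prod>m=1..n. w - lam m) = (w - mu l) ^ k l * Y"
        unfolding Y_def using assms(6)[rule_format, of w] prod.remove[of "{1..r}" l "\<lambda>j. (w - mu j) ^ k j"] l by simp
      ultimately have P: "P0 * (w - lam n) = (w - mu l) ^ Suc (k l - 1) * Y" using kl by simp
      have wmu: "w - mu l \<noteq> 0" using w by auto
      have "fz w = h w * (c * P1 / (P0 * (w - lam n))) / (1 - cnj \<zeta> * w)"
        unfolding fz_def Q_def Psi ..
      also have "\<dots> = h w * (c * P1 / ((w - mu l) ^ Suc (k l - 1) * Y)) / (1 - cnj \<zeta> * w)"
        unfolding P ..
      also have "\<dots> = c * (F l w / (w - mu l) ^ Suc (k l - 1))"
      proof -
        define X where "X = (w - mu l) ^ Suc (k l - 1)"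
        define D where "D = 1 - cnj \<zeta> * w"
        have Xnz: "X \<noteq> 0" unfolding X_def using wmu by simp
        have Dnz: "D \<noteq> 0" unfolding D_def using zden[OF wb] .
        have "h w * (c * P1 / (X * Y)) / D = c * (h w * P1 / (D * Y) / X)"
          using Xnz Dnz Ynz by (simp add: field_simps)
        then show ?thesis unfolding F_def P1_def[symmetric] Y_def[symmetric] X_def[symmetric] D_def[symmetric] .
      qed
      finally show ?thesis .
    qed
    have "residue fz (mu l) = residue (\<lambda>w. c * (F l w / (w - mu l) ^ Suc (k l - 1))) (mu l)"
    proof (rule residue_cong)
      show "eventually (\<lambda>w. fz w = c * (F l w / (w - mu l) ^ Suc (k l - 1))) (at (mu l))"
        using eventually_at_in_open[OF openA muA] by eventually_elim (use eq in auto)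
    qed simp
    also have "\<dots> = c * residue (\<lambda>w. F l w / (w - mu l) ^ Suc (k l - 1)) (mu l)"
      by (rule residue_lmul[OF openA muA]) (use holF in \<open>auto intro!: holomorphic_intros holomorphic_on_subset[OF holF]\<close>)
    also have "\<dots> = c * ((deriv ^^ (k l - 1)) (F l) (mu l) / fact (k l - 1))"
      by (simp only: residue_holomorphic_over_power[OF openA muA holF])
    finally show ?thesis .
  qed
  have Jz: "J \<zeta> = 2 * pi * \<i> * (c * (\<Sum>l=1..r. (deriv ^^ (k l - 1)) (F l) (mu l) / fact (k l - 1)))"
  proof -
    have "J \<zeta> = contour_integral (circlepath 0 \<rho>) fz" unfolding J_def fz_def ..
    also have "\<dots> = 2 * pi * \<i> * (\<Sum>p\<in>pts. residue fz p)"
      unfolding RT using pts_small by (intro arg_cong[where f="\<lambda>x. 2 * pi * \<i> * x"] sum.cong)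
         (auto intro!: winding_number_circlepath)
    also have "(\<Sum>p\<in>pts. residue fz p) = (\<Sum>l=1..r. residue fz (mu l))"
      unfolding pts_def by (rule sum.reindex_cong[OF assms(4) refl refl])
    also have "\<dots> = (\<Sum>l=1..r. c * ((deriv ^^ (k l - 1)) (F l) (mu l) / fact (k l - 1)))"
      by (intro sum.cong refl res) 
    finally show ?thesis by (simp add: sum_distrib_left)
  qed
  have ccnj: "cnj c = c" unfolding c_def by simp
  have "cnj (J \<zeta> / (2 * pi * \<i>)) = c * (\<Sum>l=1..r. cnj ((deriv ^^ (k l - 1)) (F l) (mu l)) / of_nat (fact (k l - 1)))"
    unfolding Jz by (simp add: ccnj)
  with lim2 show ?thesis unfolding F_def c_def \<gamma>_def by simp
qed

end
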